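(* Let $\ell$ be a $c$-approximate pseudo-metric ($c\ge1$), $\mathcal{H}\subseteq\mathcal{Y}^{\mathcal{X}}$ with $\operatorname{diam}(\mathcal{H})<\infty$, $U\subseteq\mathcal{H}$, $x\in\mathcal{X}$, $s_0,s_1\in\mathcal{Y}$, $\gamma=\ell(s_0,s_1)$, and $U_b=\{h\in U:h(x)=s_b\}$ for $b\in\{0,1\}$, with $U_0,U_1$ both nonempty. Then there exists $b\in\{0,1\}$ with $\Phi(U_b)\le\Phi(U)-\gamma/(4c)$.
   Context: $c$-approximate pseudo-metric: $\ell(y,y)=0$, symmetry, and $\ell(y_1,y_2)\le c(\ell(y_1,y_3)+\ell(y_2,y_3))$. $d_\ell(f,g)=\sup_{x}\ell(f(x),g(x))$, $\operatorname{diam}(\mathcal{H})=\sup_{f,g\in\mathcal{H}}d_\ell(f,g)$. $N(U,\varepsilon)$ is the minimal cardinality of $S\subseteq\mathcal{H}$ such that each $u\in U$ is within $d_\ell$-distance $\le\varepsilon$ of some element of $S$. $\Phi(U)=\int_0^{\operatorname{diam}(\mathcal{H})}\log_2N(U,\varepsilon)\,d\varepsilon\in[0,\infty]$. *)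

theory Defs
  imports "HOL-Analysis.Analysis" "HOL-Library.Extended_Nat"
begin

definition approx_pseudo_metric :: "real \<Rightarrow> ('y \<Rightarrow> 'y \<Rightarrow> real) \<Rightarrow> bool" where
  "approx_pseudo_metric c l \<longleftrightarrow>
     (\<forall>y. l y y = 0) \<and> (\<forall>y1 y2. l y1 y2 = l y2 y1) \<and>
     (\<forall>y1 y2 y3. l y1 y2 \<le> c * (l y1 y3 + l y2 y3))"

definition dist_l :: "('y \<Rightarrow> 'y \<Rightarrow> real) \<Rightarrow> ('x \<Rightarrow> 'y) \<Rightarrow> ('x \<Rightarrow> 'y) \<Rightarrow> ereal" where
  "dist_l l f g = (SUP x. ereal (l (f x) (g x)))"

definition diam_l :: "('y \<Rightarrow> 'y \<Rightarrow> real) \<Rightarrow> ('x \<Rightarrow> 'y) set \<Rightarrow> ereal" where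
  "diam_l l H = (SUP p \<in> H \<times> H. dist_l l (fst p) (snd p))"

text \<open>covering number N(U,eps) with centres in H; infinity if no finite cover exists\<close>
definition cover_num ::
  "('y \<Rightarrow> 'y \<Rightarrow> real) \<Rightarrow> ('x \<Rightarrow> 'y) set \<Rightarrow> ('x \<Rightarrow> 'y) set \<Rightarrow> real \<Rightarrow> enat" where
  "cover_num l H U eps = Inf {enat (card S) | S. finite S \<and> S \<subseteq> H \<and>
       (\<forall>u\<in>U. \<exists>s\<in>S. dist_l l u s \<le> ereal eps)}"

definition log_cover :: "('y \<Rightarrow> 'y \<Rightarrow> real) \<Rightarrow> ('x \<Rightarrow> 'y) set \<Rightarrow> ('x \<Rightarrow> 'y) set \<Rightarrow> real \<Rightarrow> ennreal" where
  "log_cover l H U eps =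
     (case cover_num l H U eps of enat n \<Rightarrow> ennreal (log 2 (real n)) | \<infinity> \<Rightarrow> \<infinity>)"

definition Phi :: "('y \<Rightarrow> 'y \<Rightarrow> real) \<Rightarrow> ('x \<Rightarrow> 'y) set \<Rightarrow> ('x \<Rightarrow> 'y) set \<Rightarrow> ennreal" where
  "Phi l H U = (\<integral>\<^sup>+ eps \<in> {0..real_of_ereal (diam_l l H)}. log_cover l H U eps \<partial>lborel)"

end

theory Submission
  imports Defs
begin

definition phi_e :: "enat \<Rightarrow> ennreal" where
  "phi_e m = (case m of enat n \<Rightarrow> ennreal (log 2 (real n)) | \<infinity> \<Rightarrow> \<infinity>)"

lemma log_cover_phi: "log_cover l H U e = phi_e (cover_num l H U e)"
  unfolding log_cover_def phi_e_def by simp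

lemma log_nat_mono: "m \<le> n \<Longrightarrow> log 2 (real m) \<le> log 2 (real n)"
proof (cases "m = 0")
  case True then show ?thesis by (cases "n = 0") (auto simp: log_def)
next
  case False then show "m \<le> n \<Longrightarrow> ?thesis" by simp
qed

lemma phi_e_mono: "m \<le> n \<Longrightarrow> phi_e m \<le> phi_e n"
  unfolding phi_e_def
  by (cases m; cases n) (auto intro: ennreal_leI log_nat_mono)

lemma cover_num_mono_set: "V \<subseteq> U \<Longrightarrow> cover_num l H V e \<le> cover_num l H U e"
  unfolding cover_num_def by (rule Inf_superset_mono) blast

lemma cover_num_anti_eps: "e \<le> e' \<Longrightarrow> cover_num l H U e' \<le> cover_num l H U e"
  unfolding cover_num_def
  by (rule Inf_superset_mono) (fastforce intro: order_trans)

lemma log_cover_anti: "e \<le> e' \<Longrightarrow> log_cover l H U e' \<le> log_cover l H U e"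
  unfolding log_cover_phi by (intro phi_e_mono cover_num_anti_eps)

lemma antitone_meas:
  fixes f :: "real \<Rightarrow> ennreal"
  assumes "\<And>a b. a \<le> b \<Longrightarrow> f b \<le> f a"
  shows "f \<in> borel_measurable borel"
proof (rule borel_measurableI_greater)
  fix y
  have "is_interval {x. y < f x}"
    unfolding is_interval_1 using assms by (auto intro: less_le_trans)
  then show "{x \<in> space borel. y < f x} \<in> sets borel"
    by (simp add: real_interval_borel_measurable)
qed

lemma log_cover_meas[measurable]: "log_cover l H U \<in> borel_measurable borel"
  by (rule antitone_meas) (rule log_cover_anti)

lemma cover_num_ge1:
  assumes "V \<noteq> {}" shows "1 \<le> cover_num l H V e"
  unfolding cover_num_def
proof (rule Inf_greatest)
  fix m assume "m \<in> {enat (card S) |S. finite S \<and> S \<subseteq> H \<and> (\<forall>u\<in>V. \<exists>s\<in>S. dist_l l u s \<le> ereal e)}"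
  then obtain S where S: "m = enat (card S)" "finite S" "\<forall>u\<in>V. \<exists>s\<in>S. dist_l l u s \<le> ereal e"
    by blast
  then have "S \<noteq> {}" using assms by blast
  then have "card S \<ge> 1" using S(2) by (simp add: Suc_leI card_gt_0_iff)
  then show "1 \<le> m" using S(1) by (simp add: one_enat_def)
qed

lemma dist_l_ge: "ereal (l (f x) (g x)) \<le> dist_l l f g"
  unfolding dist_l_def by (rule SUP_upper) simp

lemma cover_num_split:
  assumes apm: "approx_pseudo_metric c l" and c: "c \<ge> 1"
    and e: "2 * c * e < l s0 s1"
  shows "cover_num l H {h \<in> U. h x = s0} e + cover_num l H {h \<in> U. h x = s1} e
         \<le> cover_num l H U e"
proof (cases "cover_num l H U e = \<infinity>")
  case True then show ?thesis by simp
next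
  case False
  define A where "A = {enat (card S) |S. finite S \<and> S \<subseteq> H \<and> (\<forall>u\<in>U. \<exists>s\<in>S. dist_l l u s \<le> ereal e)}"
  have "Inf A \<noteq> \<infinity>" using False unfolding A_def cover_num_def by simp
  then have "A \<noteq> {}" by (auto simp: top_enat_def)
  then have "Inf A \<in> A" unfolding Inf_enat_def by (auto intro: LeastI)
  then obtain S where S: "Inf A = enat (card S)" "finite S" "S \<subseteq> H"
     "\<forall>u\<in>U. \<exists>s\<in>S. dist_l l u s \<le> ereal e"
    unfolding A_def by blast
  define S0 where "S0 = {s\<in>S. \<exists>u\<in>{h \<in> U. h x = s0}. dist_l l u s \<le> ereal e}"
  define S1 where "S1 = {s\<in>S. \<exists>u\<in>{h \<in> U. h x = s1}. dist_l l u s \<le> ereal e}"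
  have key: "l (u x) (s x) \<le> e" if "dist_l l u s \<le> ereal e" for u s
    using order_trans[OF dist_l_ge that] by simp
  have disj: "S0 \<inter> S1 = {}"
  proof (rule ccontr)
    assume "S0 \<inter> S1 \<noteq> {}"
    then obtain s u0 u1 where "u0 x = s0" "u1 x = s1" "dist_l l u0 s \<le> ereal e"
      "dist_l l u1 s \<le> ereal e" unfolding S0_def S1_def by blast
    then have h: "l s0 (s x) \<le> e" "l s1 (s x) \<le> e" using key by fastforce+
    have "l s0 s1 \<le> c * (l s0 (s x) + l s1 (s x))"
      using apm unfolding approx_pseudo_metric_def by blast
    also have "\<dots> \<le> c * (e + e)" using h c by (intro mult_left_mono) auto
    finally show False using e by simp
  qed
  have c0: "cover_num l H {h \<in> U. h x = s0} e \<le> enat (card S0)"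
    unfolding cover_num_def
  proof (rule Inf_lower, intro CollectI exI conjI)
    show "finite S0" "S0 \<subseteq> H" using S unfolding S0_def by auto
    show "\<forall>u\<in>{h \<in> U. h x = s0}. \<exists>s\<in>S0. dist_l l u s \<le> ereal e"
    proof
      fix u assume u: "u \<in> {h \<in> U. h x = s0}"
      then obtain s where "s \<in> S" "dist_l l u s \<le> ereal e" using S(4) by blast
      then show "\<exists>s\<in>S0. dist_l l u s \<le> ereal e" using u unfolding S0_def by blast
    qed
  qed simp
  have c1: "cover_num l H {h \<in> U. h x = s1} e \<le> enat (card S1)"
    unfolding cover_num_def
  proof (rule Inf_lower, intro CollectI exI conjI)
    show "finite S1" "S1 \<subseteq> H" using S unfolding S1_def by auto
    show "\<forall>u\<in>{h \<in> U. h x = s1}. \<exists>s\<in>S1. dist_l l u s \<le> ereal e"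
    proof
      fix u assume u: "u \<in> {h \<in> U. h x = s1}"
      then obtain s where "s \<in> S" "dist_l l u s \<le> ereal e" using S(4) by blast
      then show "\<exists>s\<in>S1. dist_l l u s \<le> ereal e" using u unfolding S1_def by blast
    qed
  qed simp
  have "card S0 + card S1 = card (S0 \<union> S1)"
    using disj S(2) by (simp add: S0_def S1_def card_Un_disjoint)
  also have "\<dots> \<le> card S" using S(2) by (intro card_mono) (auto simp: S0_def S1_def)
  finally have "card S0 + card S1 \<le> card S" .
  then have "enat (card S0) + enat (card S1) \<le> enat (card S)" by simp
  moreover have "cover_num l H U e = enat (card S)" using S(1) unfolding cover_num_def A_def by simp
  moreover have "cover_num l H {h \<in> U. h x = s0} e + cover_num l H {h \<in> U. h x = s1} e
      \<le> enat (card S0) + enat (card S1)" using c0 c1 by (rule add_mono)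
  ultimately show ?thesis using order_trans by fastforce
qed

lemma log_ineq:
  assumes "n0 \<ge> 1" "n1 \<ge> 1" "n0 + n1 \<le> (n::nat)"
  shows "log 2 (real n0) + log 2 (real n1) + 2 \<le> 2 * log 2 (real n)"
proof -
  have "log 2 (real n0) + log 2 (real n1) + 2 = log 2 (4 * real n0 * real n1)"
    using assms log_pow_cancel[of 2 2] by (simp add: log_mult)
  also have "\<dots> \<le> log 2 ((real n) ^ 2)"
  proof -
    have "4 * real n0 * real n1 \<le> (real n0 + real n1) ^ 2"
    proof -
      have "0 \<le> (real n0 - real n1) ^ 2" by simp
      then show ?thesis by (simp add: power2_eq_square algebra_simps)
    qed
    also have "\<dots> \<le> (real n) ^ 2" using assms
      by (intro power_mono) (simp_all add: of_nat_add[symmetric] del: of_nat_add)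
    finally show ?thesis using assms by (intro log_le_cancel_iff[THEN iffD2]) auto
  qed
  also have "\<dots> = 2 * log 2 (real n)" using assms by (simp add: log_nat_power)
  finally show ?thesis .
qed

lemma ennreal_le_sum3a: "(a::ennreal) \<le> a + b + d"
  by (metis add.assoc add_increasing2 order_refl zero_le)

lemma ennreal_le_sum3b: "(b::ennreal) \<le> a + b + d"
  by (metis add.commute ennreal_le_sum3a)

lemma log_cover_meas_lb[measurable]: "log_cover l H U \<in> borel_measurable lborel"
  by simp

lemma pointwise_core:
  assumes apm: "approx_pseudo_metric c l" and c: "c \<ge> 1"
    and e: "2 * c * e < l s0 s1"
    and ne0: "{h \<in> U. h x = s0} \<noteq> {}" and ne1: "{h \<in> U. h x = s1} \<noteq> {}"
  shows "log_cover l H {h \<in> U. h x = s0} e + log_cover l H {h \<in> U. h x = s1} e + 2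
         \<le> log_cover l H U e + log_cover l H U e"
proof -
  define N where "N = cover_num l H U e"
  define N0 where "N0 = cover_num l H {h \<in> U. h x = s0} e"
  define N1 where "N1 = cover_num l H {h \<in> U. h x = s1} e"
  have sp: "N0 + N1 \<le> N" unfolding N_def N0_def N1_def by (rule cover_num_split[OF apm c e])
  have g0: "1 \<le> N0" unfolding N0_def by (rule cover_num_ge1[OF ne0])
  have g1: "1 \<le> N1" unfolding N1_def by (rule cover_num_ge1[OF ne1])
  show ?thesis
  proof (cases N)
    case infinity
    then show ?thesis unfolding log_cover_phi N_def[symmetric] phi_e_def by simp
  next
    case (enat n)
    obtain n0 where n0: "N0 = enat n0" using sp enat by (cases N0) auto
    obtain n1 where n1: "N1 = enat n1" using sp enat by (cases N1) auto
    have nn: "n0 \<ge> 1" "n1 \<ge> 1" "n0 + n1 \<le> n" using sp g0 g1 n0 n1 enat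
      by (auto simp: one_enat_def)
    have l0: "log 2 (real n0) \<ge> 0" "log 2 (real n1) \<ge> 0" using nn by auto
    have "ennreal (log 2 (real n0)) + ennreal (log 2 (real n1)) + 2
        = ennreal (log 2 (real n0) + log 2 (real n1) + 2)"
      using l0 by (simp add: ennreal_plus)
    also have "\<dots> \<le> ennreal (log 2 (real n) + log 2 (real n))"
      using log_ineq[OF nn] by (intro ennreal_leI) simp
    also have "\<dots> = ennreal (log 2 (real n)) + ennreal (log 2 (real n))"
      using nn by (intro ennreal_plus) auto
    finally show ?thesis unfolding log_cover_phi N_def[symmetric] N0_def[symmetric]
        N1_def[symmetric] phi_e_def using enat n0 n1 by simp
  qed
qed

theorem lemma3p3:
  fixes l :: "'y \<Rightarrow> 'y \<Rightarrow> real" and c :: real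
    and H U :: "('x \<Rightarrow> 'y) set" and x :: 'x and s0 s1 :: 'y
  assumes "c \<ge> 1" and "approx_pseudo_metric c l"
    and "diam_l l H < \<infinity>"
    and "U \<subseteq> H"
    and "{h \<in> U. h x = s0} \<noteq> {}" and "{h \<in> U. h x = s1} \<noteq> {}"
  shows "\<exists>b \<in> {s0, s1}.
           Phi l H {h \<in> U. h x = b} + ennreal (l s0 s1 / (4 * c)) \<le> Phi l H U"
proof -
  note c = assms(1) and apm = assms(2)
  define \<gamma> where "\<gamma> = l s0 s1"
  obtain u0 where u0: "u0 \<in> U" "u0 x = s0" using assms(5) by blast
  obtain u1 where u1: "u1 \<in> U" "u1 x = s1" using assms(6) by blast
  have lnn: "l a b \<ge> 0" for a b
  proof -
    have "l a a \<le> c * (l a b + l a b)" using apm unfolding approx_pseudo_metric_def by blast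
    moreover have "l a a = 0" using apm unfolding approx_pseudo_metric_def by blast
    ultimately have "0 \<le> c * (l a b + l a b)" by simp
    then show ?thesis using c by (simp add: zero_le_mult_iff)
  qed
  have "ereal \<gamma> \<le> dist_l l u0 u1" unfolding \<gamma>_def using dist_l_ge[of l u0 x u1] u0 u1 by simp
  also have "\<dots> \<le> diam_l l H" unfolding diam_l_def
    using u0 u1 assms(4) by (intro SUP_upper2[of "(u0,u1)"]) auto
  finally have gd: "ereal \<gamma> \<le> diam_l l H" .
  then obtain D where D: "diam_l l H = ereal D" using assms(3) by (cases "diam_l l H") auto
  have gD: "\<gamma> \<le> D" using gd D by simp
  define \<delta> where "\<delta> = \<gamma> / (2 * c)"
  have g0: "\<gamma> \<ge> 0" unfolding \<gamma>_def by (rule lnn)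
  have d0: "\<delta> \<ge> 0" unfolding \<delta>_def using g0 c by simp
  have dD: "\<delta> \<le> D"
  proof -
    have "\<gamma> * 1 \<le> \<gamma> * (2 * c)" using g0 c by (intro mult_left_mono) auto
    then have "\<delta> \<le> \<gamma>" unfolding \<delta>_def using c by (simp add: divide_le_eq)
    then show ?thesis using gD by simp
  qed
  define I :: "real \<Rightarrow> ennreal" where "I = indicator {0..D}"
  define J :: "real \<Rightarrow> ennreal" where "J = indicator {0..<\<delta>}"
  let ?f = "log_cover l H U"
  let ?g0 = "log_cover l H {h \<in> U. h x = s0}"
  let ?g1 = "log_cover l H {h \<in> U. h x = s1}"
  have pw: "?g0 e * I e + ?g1 e * I e + 2 * J e \<le> ?f e * I e + ?f e * I e" for e
  proof (cases "e \<in> {0..<\<delta>}")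
    case True
    then have "2 * c * e < \<gamma>" unfolding \<delta>_def using c by (simp add: field_simps)
    then have "?g0 e + ?g1 e + 2 \<le> ?f e + ?f e"
      unfolding \<gamma>_def by (rule pointwise_core[OF apm c _ assms(5,6)])
    moreover have "I e = 1" "J e = 1" using True dD unfolding I_def J_def by auto
    ultimately show ?thesis by simp
  next
    case False
    have "J e = 0" using False unfolding J_def by simp
    have m0: "?g0 e \<le> ?f e" "?g1 e \<le> ?f e" unfolding log_cover_phi
      by (intro phi_e_mono cover_num_mono_set; blast)+
    show ?thesis using \<open>J e = 0\<close>
      by (simp add: add_mono mult_right_mono m0)
  qed
  have PhiI: "Phi l H V = (\<integral>\<^sup>+ e. log_cover l H V e * I e \<partial>lborel)" for V
    unfolding Phi_def I_def D by simp
  have eqL: "(\<integral>\<^sup>+ e. ?g0 e * I e + ?g1 e * I e + 2 * J e \<partial>lborel)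
      = Phi l H {h \<in> U. h x = s0} + Phi l H {h \<in> U. h x = s1} + 2 * ennreal \<delta>"
    unfolding PhiI using d0
    by (simp add: nn_integral_add nn_integral_cmult_indicator I_def J_def)
  have leI: "(\<integral>\<^sup>+ e. ?g0 e * I e + ?g1 e * I e + 2 * J e \<partial>lborel)
      \<le> (\<integral>\<^sup>+ e. ?f e * I e + ?f e * I e \<partial>lborel)"
    by (rule nn_integral_mono) (rule pw)
  have eqR: "(\<integral>\<^sup>+ e. ?f e * I e + ?f e * I e \<partial>lborel) = Phi l H U + Phi l H U"
    unfolding PhiI by (simp add: nn_integral_add I_def)
  have main: "Phi l H {h \<in> U. h x = s0} + Phi l H {h \<in> U. h x = s1} + 2 * ennreal \<delta>
      \<le> Phi l H U + Phi l H U" using eqL leI eqR by simp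
  show ?thesis
  proof (cases "Phi l H U = \<infinity>")
    case True then show ?thesis by auto
  next
    case False
    then obtain p where p: "Phi l H U = ennreal p" "p \<ge> 0" by (cases "Phi l H U") auto
    have le0: "Phi l H {h \<in> U. h x = s0} \<le> Phi l H U + Phi l H U"
      using main by (rule order_trans[rotated]) (rule ennreal_le_sum3a)
    have le1: "Phi l H {h \<in> U. h x = s1} \<le> Phi l H U + Phi l H U"
      using main by (rule order_trans[rotated]) (rule ennreal_le_sum3b)
    obtain p0 where p0: "Phi l H {h \<in> U. h x = s0} = ennreal p0" "p0 \<ge> 0"
      using le0 p by (cases "Phi l H {h \<in> U. h x = s0}") (auto simp: top_unique simp flip: ennreal_plus)
    obtain p1 where p1: "Phi l H {h \<in> U. h x = s1} = ennreal p1" "p1 \<ge> 0"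
      using le1 p by (cases "Phi l H {h \<in> U. h x = s1}") (auto simp: top_unique simp flip: ennreal_plus)
    have "ennreal (p0 + p1 + 2 * \<delta>) \<le> ennreal (p + p)"
    proof -
      have e1: "ennreal (p0 + p1 + 2 * \<delta>) = ennreal p0 + ennreal p1 + 2 * ennreal \<delta>"
        using p0 p1 d0 by (simp add: ennreal_plus ennreal_mult)
      have e2: "ennreal (p + p) = ennreal p + ennreal p" using p ennreal_plus[of p p] by simp
      show ?thesis unfolding e1 e2 using main p p0 p1 by simp
    qed
    then have r: "p0 + p1 + 2 * \<delta> \<le> p + p" using p by simp
    have k: "\<gamma> / (4 * c) = \<delta> / 2" unfolding \<delta>_def by simp
    show ?thesis
    proof (cases "p0 \<le> p1")
      case True
      then have "p0 + \<gamma> / (4 * c) \<le> p" using r k d0 by simp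
      then have "ennreal p0 + ennreal (\<gamma> / (4 * c)) \<le> ennreal p"
      proof -
        have "\<gamma> / (4 * c) \<ge> 0" using g0 c by simp
        then have "ennreal p0 + ennreal (\<gamma> / (4 * c)) = ennreal (p0 + \<gamma> / (4 * c))"
          using p0 by (simp add: ennreal_plus)
        also have "\<dots> \<le> ennreal p" by (rule ennreal_leI) fact
        finally show ?thesis .
      qed
      then show ?thesis using p p0 unfolding \<gamma>_def by auto
    next
      case False
      then have "p1 + \<gamma> / (4 * c) \<le> p" using r k d0 by simp
      then have "ennreal p1 + ennreal (\<gamma> / (4 * c)) \<le> ennreal p"
      proof -
        have "\<gamma> / (4 * c) \<ge> 0" using g0 c by simp
        then have "ennreal p1 + ennreal (\<gamma> / (4 * c)) = ennreal (p1 + \<gamma> / (4 * c))"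
          using p1 by (simp add: ennreal_plus)
        also have "\<dots> \<le> ennreal p" by (rule ennreal_leI) fact
        finally show ?thesis .
      qed
      then show ?thesis using p p1 unfolding \<gamma>_def by auto
    qed
  qed
qed

end
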